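(* Let $D,K\in\mathbb{N}$ and let $A_1,A_2,a,\varepsilon>0$ be real numbers with $a<1\leq A_1<A_2$. Let $\{d_n\}_{n\in\mathbb{N}}$ be a sequence of natural numbers and write $D_n=\prod_{i=1}^{n}d_i$. For $i=1,\ldots,K$, let $\{\alpha_{i,n}\}_{n\in\mathbb{N}}$ and $\{b_{i,n}\}_{n\in\mathbb{N}}$ be sequences of complex numbers such that: (1) $|\alpha_{1,n}|<|\alpha_{1,n+1}|$ for all $n\in\mathbb{N}$; (2) $|\alpha_{1,n}|\geq n^{1+\varepsilon}$ for all $n\in\mathbb{N}$; (3) $\liminf_{n\to\infty}|\alpha_{1,n}|^{1/(D^n\prod_{i=1}^{n-1}(KD_i+d_i))}=A_1$; (4) $\limsup_{n\to\infty}|\alpha_{1,n}|^{1/(D^n\prod_{i=1}^{n-1}(KD_i+d_i))}=A_2$; (5) for all $n\in\mathbb{N}$ and all $1<i\leq K$: $2^{-(\log_2|\alpha_{1,n}|)^a}<\frac{|\alpha_{1,n}|}{|\alpha_{i,n}|}<2^{(\log_2|\alpha_{1,n}|)^a}$; (6) for all $n\in\mathbb{N}$ and all $1\leq i\leq K$: $|b_{i,n}|\leq 2^{(\log_2|\alpha_{1,n}|)^a}$. Let $\beta_1,\ldots,\beta_K\in\mathbb{Z}$, not all $0$, and write $\gamma(N)=\sum_{j=1}^{K}\beta_j\sum_{n=N+1}^{\infty}\frac{b_{j,n}}{\alpha_{j,n}}$. Let $c\in(a,1)$. Then $$\liminf_{N\to\infty}|\gamma(N)|\left(2^{D^{cN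}\prod_{i=1}^{N-1}(KD_i+d_i)^{c}}\prod_{n=1}^{N}|\alpha_{1,n}|^{K}\right)^{DD_N}=0.$$
   Context: $\mathbb{N}=\{1,2,3,\ldots\}$; empty products equal $1$. *)

theory Defs
  imports Complex_Main "HOL-Library.Extended_Real" "HOL-Library.Liminf_Limsup"
begin

definition Dprod :: "(nat \<Rightarrow> nat) \<Rightarrow> nat \<Rightarrow> nat" where
  "Dprod d n = (\<Prod>i=1..n. d i)"

definition Pprod :: "nat \<Rightarrow> (nat \<Rightarrow> nat) \<Rightarrow> nat \<Rightarrow> nat" where
  "Pprod K d n = (\<Prod>i=1..n-1. K * Dprod d i + d i)"

definition gamma :: "nat \<Rightarrow> (nat \<Rightarrow> int) \<Rightarrow> (nat \<Rightarrow> nat \<Rightarrow> complex) \<Rightarrow> (nat \<Rightarrow> nat \<Rightarrow> complex) \<Rightarrow> nat \<Rightarrow> complex" where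
  "gamma K \<beta> b \<alpha> N =
     (\<Sum>j=1..K. of_int (\<beta> j) * (\<Sum>m. b j (m + N + 1) / \<alpha> j (m + N + 1)))"

end

theory Submission
  imports Defs "HOL-Analysis.Summation_Tests"
begin

locale L32 =
  fixes D K :: nat and A1 A2 a \<epsilon> c :: real
    and d :: "nat \<Rightarrow> nat"
    and \<alpha> b :: "nat \<Rightarrow> nat \<Rightarrow> complex"
    and \<beta> :: "nat \<Rightarrow> int"
  assumes DK: "D \<ge> 1" "K \<ge> 1"
    and pos: "a > 0" "\<epsilon> > 0" "A1 > 0" "A2 > 0"
    and ord: "a < 1" "1 \<le> A1" "A1 < A2"
    and d_nat: "\<forall>n\<ge>1. d n \<ge> 1"
    and h1: "\<forall>n\<ge>1. norm (\<alpha> 1 n) < norm (\<alpha> 1 (n + 1))"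
    and h2: "\<forall>n\<ge>1. norm (\<alpha> 1 n) \<ge> real n powr (1 + \<epsilon>)"
    and h3: "liminf (\<lambda>n. ereal (norm (\<alpha> 1 n) powr (1 / (real D ^ n * real (Pprod K d n))))) = ereal A1"
    and h4: "limsup (\<lambda>n. ereal (norm (\<alpha> 1 n) powr (1 / (real D ^ n * real (Pprod K d n))))) = ereal A2"
    and h5: "\<forall>n\<ge>1. \<forall>i. 1 < i \<and> i \<le> K \<longrightarrow>
               2 powr (- ((log 2 (norm (\<alpha> 1 n))) powr a)) < norm (\<alpha> 1 n) / norm (\<alpha> i n) \<and>
               norm (\<alpha> 1 n) / norm (\<alpha> i n) < 2 powr ((log 2 (norm (\<alpha> 1 n))) powr a)"
    and h6: "\<forall>n\<ge>1. \<forall>i. 1 \<le> i \<and> i \<le> K \<longrightarrow>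
               norm (b i n) \<le> 2 powr ((log 2 (norm (\<alpha> 1 n))) powr a)"
    and hbeta: "\<exists>j\<in>{1..K}. \<beta> j \<noteq> 0"
    and hc: "a < c" "c < 1"
begin

definition "x n = norm (\<alpha> 1 n)"
definition "lam n = log 2 (x n)"
definition "Dp n = real (Dprod d n)"
definition "P n = real (Pprod K d n)"
definition "E n = real D ^ n * P n"
definition "S n = (\<Sum>i=1..n. lam i)"
definition "s n = S n / E n"
definition "L n = lam n / E n"
definition "Z n = real D powr (c * real n) * (\<Prod>i=1..n-1. real (K * Dprod d i + d i) powr c)"
definition "W n = real D * Dp n * (Z n + real K * S n)"
definition "u n = 2 powr (2 * lam n powr a - lam n)"

lemma x_ge1: "n \<ge> 1 \<Longrightarrow> x n \<ge> 1"
proof -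
  assume n: "n \<ge> 1"
  have "real n powr (1 + \<epsilon>) \<ge> 1" using n pos by (simp add: ge_one_powr_ge_zero)
  thus ?thesis using h2 n unfolding x_def by force
qed

lemma x_pos: "n \<ge> 1 \<Longrightarrow> x n > 0" using x_ge1[of n] by simp

lemma x_eq: "n \<ge> 1 \<Longrightarrow> x n = 2 powr lam n"
  using x_pos[of n] unfolding lam_def by simp

lemma lam_nonneg: "n \<ge> 1 \<Longrightarrow> lam n \<ge> 0"
  using x_ge1[of n] unfolding lam_def by simp

lemma lam_ge: "n \<ge> 1 \<Longrightarrow> lam n \<ge> (1 + \<epsilon>) * log 2 (real n)"
proof -
  assume n: "n \<ge> 1"
  have "log 2 (real n powr (1 + \<epsilon>)) \<le> log 2 (x n)"
    using h2 n x_pos[of n] by (subst log_le_cancel_iff) (auto simp: x_def)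
  moreover have "log 2 (real n powr (1 + \<epsilon>)) = (1 + \<epsilon>) * log 2 (real n)"
    by (simp add: log_powr)
  ultimately show ?thesis unfolding lam_def by simp
qed

lemma x_mono: "1 \<le> m \<Longrightarrow> m \<le> n \<Longrightarrow> x m \<le> x n"
proof (induction n)
  case 0 then show ?case by simp
next
  case (Suc n)
  show ?case
  proof (cases "m = Suc n")
    case True then show ?thesis by simp
  next
    case False
    then have "m \<le> n" using Suc by simp
    then have "x m \<le> x n" using Suc by simp
    also have "x n < x (Suc n)" using h1 \<open>m \<le> n\<close> Suc unfolding x_def by simp
    finally show ?thesis by simp
  qed
qed

lemma lam_mono: "1 \<le> m \<Longrightarrow> m \<le> n \<Longrightarrow> lam m \<le> lam n"
  unfolding lam_def using x_mono[of m n] x_pos[of m] by simp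

lemma d_ge1: "n \<ge> 1 \<Longrightarrow> d n \<ge> 1" using d_nat by simp

lemma Dprod_ge1: "Dprod d n \<ge> 1"
  unfolding Dprod_def by (rule prod_ge_1) (use d_ge1 in auto)

lemma Dprod_Suc: "Dprod d (Suc n) = Dprod d n * d (Suc n)"
  unfolding Dprod_def by (simp add: prod.nat_ivl_Suc')

lemma Dprod_ge_d: "n \<ge> 1 \<Longrightarrow> Dprod d n \<ge> d n"
proof -
  assume "n \<ge> 1"
  then obtain m where m: "n = Suc m" by (cases n) auto
  show ?thesis using Dprod_ge1[of m] unfolding m Dprod_Suc by simp
qed

lemma Dp_ge1: "Dp n \<ge> 1" using Dprod_ge1[of n] unfolding Dp_def by simp

lemma Pprod_Suc: "n \<ge> 1 \<Longrightarrow> Pprod K d (Suc n) = Pprod K d n * (K * Dprod d n + d n)"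
proof -
  assume n: "n \<ge> 1"
  then obtain m where m: "n = Suc m" by (cases n) auto
  show ?thesis unfolding Pprod_def m by (simp add: prod.nat_ivl_Suc')
qed

lemma Pprod_ge1: "Pprod K d n \<ge> 1"
  unfolding Pprod_def by (rule prod_ge_1) (use Dprod_ge1 DK in \<open>auto simp: Suc_le_eq\<close>)

lemma P_Suc: "n \<ge> 1 \<Longrightarrow> P (Suc n) = P n * (real K * Dp n + real (d n))"
  unfolding P_def Dp_def using Pprod_Suc by simp

lemma factor_ge2: "n \<ge> 1 \<Longrightarrow> real K * Dp n + real (d n) \<ge> 2"
proof -
  assume n: "n \<ge> 1"
  have "real K * Dp n \<ge> 1 * 1" using DK Dp_ge1[of n] by (intro mult_mono) auto
  moreover have "real (d n) \<ge> 1" using d_ge1[OF n] by simp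
  ultimately show ?thesis by simp
qed

lemma P_pos: "P n \<ge> 1" unfolding P_def using Pprod_ge1 by simp

lemma P_ge_pow: "P (Suc n) \<ge> 2 ^ n"
proof (induction n)
  case 0 then show ?case using P_pos[of 1] by simp
next
  case (Suc n)
  have "P (Suc (Suc n)) = P (Suc n) * (real K * Dp (Suc n) + real (d (Suc n)))"
    by (rule P_Suc) simp
  also have "\<dots> \<ge> 2 ^ n * 2"
    using Suc factor_ge2[of "Suc n"] P_pos[of "Suc n"] by (intro mult_mono) auto
  finally show ?case by simp
qed

lemma E_pos: "E n \<ge> 1"
proof -
  have "real D ^ n \<ge> 1" using DK by (simp add: one_le_power)
  then have "real D ^ n * P n \<ge> 1 * 1" using P_pos[of n] by (intro mult_mono) auto
  then show ?thesis unfolding E_def by simp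
qed

lemma E_Suc: "n \<ge> 1 \<Longrightarrow> E (Suc n) = E n * (real D * (real K * Dp n + real (d n)))"
  unfolding E_def using P_Suc by simp

lemma E_double: "n \<ge> 1 \<Longrightarrow> E (Suc n) \<ge> 2 * E n"
proof -
  assume n: "n \<ge> 1"
  have "real D * (real K * Dp n + real (d n)) \<ge> 1 * 2"
    using DK factor_ge2[OF n] by (intro mult_mono) auto
  then show ?thesis using E_Suc[OF n] E_pos[of n] by (simp add: mult.commute mult_left_mono)
qed

lemma E_shift: "n \<ge> 1 \<Longrightarrow> E (n + r) \<ge> 2 ^ r * E n"
proof (induction r)
  case 0 then show ?case by simp
next
  case (Suc r)
  have "E (Suc (n + r)) \<ge> 2 * E (n + r)" using Suc by (intro E_double) simp
  then show ?case using Suc by simp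
qed

lemma E_ge_pow: "E (Suc n) \<ge> 2 ^ n"
  unfolding E_def using P_ge_pow[of n] DK
  by (smt (verit, ccfv_threshold) E_def E_pos P_pos mult_le_cancel_right1 one_le_power of_nat_1 of_nat_mono)

end

context L32 begin

lemma pow_lin: "t > 0 \<Longrightarrow> \<exists>C\<ge>0. \<forall>y\<ge>0. y powr a \<le> t * y + C"
proof -
  assume t: "t > 0"
  define C where "C = (1/t) powr (a / (1 - a))"
  have C0: "C \<ge> 0" unfolding C_def by simp
  have "y powr a \<le> t * y + C" if y: "y \<ge> 0" for y
  proof (cases "y \<le> (1/t) powr (1 / (1 - a))")
    case True
    have "y powr a \<le> ((1/t) powr (1 / (1 - a))) powr a"
      using True y pos ord by (intro powr_mono2) auto
    also have "\<dots> = C" unfolding C_def by (simp add: powr_powr)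
    finally show ?thesis using t y by (smt (verit) mult_nonneg_nonneg)
  next
    case False
    then have yp: "y > 0" using y by (smt (verit) powr_ge_zero)
    have "y powr (1 - a) > ((1/t) powr (1 / (1 - a))) powr (1 - a)"
      using False ord by (intro powr_less_mono2) auto
    also have "((1/t) powr (1 / (1 - a))) powr (1 - a) = 1 / t"
      using ord t by (simp add: powr_powr)
    finally have "t * y powr (1 - a) > 1" using t by (simp add: field_simps)
    then have "t * y powr (1 - a) * y powr a \<ge> 1 * y powr a" by (intro mult_right_mono) auto
    moreover have "y powr (1 - a) * y powr a = y" using yp by (simp add: powr_add[symmetric])
    ultimately show ?thesis using C0 by (simp add: mult.assoc)
  qed
  then show ?thesis using C0 by blast
qed

definition "tt = \<epsilon> / (8 * (1 + \<epsilon>))"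
definition "C4 = (SOME C. C \<ge> 0 \<and> (\<forall>y\<ge>0. y powr a \<le> tt * y + C))"

lemma tt_pos: "tt > 0" unfolding tt_def using pos by simp

lemma C4: "C4 \<ge> 0" "\<And>y. y \<ge> 0 \<Longrightarrow> y powr a \<le> tt * y + C4"
proof -
  have "\<exists>C. C \<ge> 0 \<and> (\<forall>y\<ge>0. y powr a \<le> tt * y + C)" using pow_lin[OF tt_pos] by blast
  from someI_ex[OF this] show "C4 \<ge> 0" "\<And>y. y \<ge> 0 \<Longrightarrow> y powr a \<le> tt * y + C4"
    unfolding C4_def by auto
qed

lemma u_bound: "n \<ge> 1 \<Longrightarrow> u n \<le> 2 powr (2 * C4) * real n powr (-(1 + 3 * \<epsilon> / 4))"
proof -
  assume n: "n \<ge> 1"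
  have l0: "lam n \<ge> 0" using lam_nonneg[OF n] .
  have "2 * lam n powr a - lam n \<le> 2 * (tt * lam n + C4) - lam n" using C4(2)[OF l0] by simp
  also have "\<dots> = 2 * C4 - (1 - 2 * tt) * lam n" by (simp add: algebra_simps)
  also have "\<dots> \<le> 2 * C4 - (1 - 2 * tt) * ((1 + \<epsilon>) * log 2 (real n))"
  proof -
    have h: "1 - 2 * tt \<ge> 0" unfolding tt_def using pos by (simp add: field_simps)
    show ?thesis using mult_left_mono[OF lam_ge[OF n] h] by linarith
  qed
  finally have ex0: "2 * lam n powr a - lam n \<le> 2 * C4 - (1 - 2 * tt) * ((1 + \<epsilon>) * log 2 (real n))" .
  have "(1 - 2 * tt) * (1 + \<epsilon>) = 1 + 3 * \<epsilon> / 4" unfolding tt_def using pos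
    by (simp add: field_simps)
  then have ex: "2 * lam n powr a - lam n \<le> 2 * C4 - (1 + 3 * \<epsilon> / 4) * log 2 (real n)"
    using ex0 by (simp add: mult.assoc[symmetric])
  have e1: "2 powr ((1 + 3 * \<epsilon> / 4) * log 2 (real n)) = real n powr (1 + 3 * \<epsilon> / 4)"
  proof -
    have "2 powr ((1 + 3 * \<epsilon> / 4) * log 2 (real n)) = (2 powr log 2 (real n)) powr (1 + 3 * \<epsilon> / 4)"
      by (simp add: powr_powr mult.commute)
    then show ?thesis using n by simp
  qed
  have "u n \<le> 2 powr (2 * C4 - (1 + 3 * \<epsilon> / 4) * log 2 (real n))"
    unfolding u_def using ex by (intro powr_mono) auto
  also have "\<dots> = 2 powr (2 * C4) / 2 powr ((1 + 3 * \<epsilon> / 4) * log 2 (real n))"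
    by (rule powr_diff)
  also have "\<dots> = 2 powr (2 * C4) / real n powr (1 + 3 * \<epsilon> / 4)"
    by (simp only: e1)
  also have "\<dots> = 2 powr (2 * C4) * real n powr (-(1 + 3 * \<epsilon> / 4))"
    by (subst powr_minus_divide) simp
  finally show ?thesis .
qed

lemma u_nonneg: "u n \<ge> 0" unfolding u_def by simp

lemma u_summable: "summable u"
proof (rule summable_comparison_test')
  show "summable (\<lambda>n. 2 powr (2 * C4) * real n powr (-(1 + 3 * \<epsilon> / 4)))"
    using pos by (intro summable_mult) (subst summable_real_powr_iff, simp)
  show "norm (u n) \<le> 2 powr (2 * C4) * real n powr (-(1 + 3 * \<epsilon> / 4))" if "n \<ge> 1" for n
    using u_bound[OF that] u_nonneg[of n] by simp
qed

lemma ba_bound: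
  assumes n: "n \<ge> 1" and j: "1 \<le> j" "j \<le> K"
  shows "norm (b j n / \<alpha> j n) \<le> u n"
proof -
  have bb: "norm (b j n) \<le> 2 powr (lam n powr a)" using h6 n j unfolding lam_def x_def by auto
  have aa: "1 / norm (\<alpha> j n) \<le> 2 powr (lam n powr a) / x n"
  proof (cases "j = 1")
    case True
    have "2 powr (lam n powr a) \<ge> 1" by (simp add: ge_one_powr_ge_zero)
    then show ?thesis using x_pos[OF n] True by (simp add: x_def divide_right_mono)
  next
    case False
    then have "1 < j" using j by simp
    then have hh: "2 powr (- (lam n powr a)) < x n / norm (\<alpha> j n)"
      "x n / norm (\<alpha> j n) < 2 powr (lam n powr a)"
      using h5 n j unfolding lam_def x_def by auto
    have "norm (\<alpha> j n) \<noteq> 0" using hh(1) by (metis div_by_0 powr_non_neg)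
    then show ?thesis using hh(2) x_pos[OF n]
      by (simp add: field_simps)
  qed
  have "norm (b j n / \<alpha> j n) = norm (b j n) * (1 / norm (\<alpha> j n))"
    by (simp add: norm_divide)
  also have "\<dots> \<le> 2 powr (lam n powr a) * (2 powr (lam n powr a) / x n)"
    using bb aa by (intro mult_mono) auto
  also have "\<dots> = u n"
  proof -
    have "u n = 2 powr (lam n powr a + lam n powr a) / 2 powr lam n"
      unfolding u_def by (subst powr_diff[symmetric]) simp
    also have "\<dots> = 2 powr (lam n powr a) * 2 powr (lam n powr a) / x n"
      using x_eq[OF n] by (simp only: powr_add)
    finally show ?thesis by simp
  qed
  finally show ?thesis .
qed

definition "T N = (\<Sum>m. u (m + N + 1))"
definition "B = (\<Sum>j=1..K. \<bar>real_of_int (\<beta> j)\<bar>)"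

lemma T_summable: "summable (\<lambda>m. u (m + N + 1))"
  using u_summable summable_iff_shift[of u "N + 1"] by (simp add: add.assoc)

lemma B_pos: "B \<ge> 1"
proof -
  obtain j where j: "j \<in> {1..K}" "\<beta> j \<noteq> 0" using hbeta by blast
  have "\<bar>real_of_int (\<beta> j)\<bar> \<ge> 1" using j(2) by linarith
  also have "\<bar>real_of_int (\<beta> j)\<bar> \<le> B" unfolding B_def
    using j(1) by (intro member_le_sum) auto
  finally show ?thesis .
qed

lemma gamma_bound: "norm (gamma K \<beta> b \<alpha> N) \<le> B * T N"
proof -
  have inner: "norm (\<Sum>m. b j (m + N + 1) / \<alpha> j (m + N + 1)) \<le> T N" if j: "j \<in> {1..K}" for j
    unfolding T_def using j by (intro norm_suminf_le T_summable ba_bound) auto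
  have "norm (gamma K \<beta> b \<alpha> N) \<le> (\<Sum>j=1..K. norm (of_int (\<beta> j) * (\<Sum>m. b j (m + N + 1) / \<alpha> j (m + N + 1))))"
    unfolding gamma_def by (rule norm_sum)
  also have "\<dots> \<le> (\<Sum>j=1..K. \<bar>real_of_int (\<beta> j)\<bar> * T N)"
    by (intro sum_mono) (use inner in \<open>auto simp: norm_mult intro: mult_left_mono\<close>)
  also have "\<dots> = B * T N" unfolding B_def by (simp add: sum_distrib_right)
  finally show ?thesis .
qed

definition "termf N = norm (gamma K \<beta> b \<alpha> N) *
            (2 powr (real D powr (c * real N) * (\<Prod>i=1..N-1. real (K * Dprod d i + d i) powr c))
             * (\<Prod>n=1..N. norm (\<alpha> 1 n) ^ K)) ^ (D * Dprod d N)"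

lemma termf_eq: "termf N = norm (gamma K \<beta> b \<alpha> N) * 2 powr W N"
proof -
  have "(\<Prod>n=1..N. norm (\<alpha> 1 n) ^ K) = (\<Prod>n=1..N. 2 powr (real K * lam n))"
  proof (intro prod.cong refl)
    fix n assume "n \<in> {1..N}"
    then have "norm (\<alpha> 1 n) = 2 powr lam n" using x_eq[of n] unfolding x_def by simp
    then show "norm (\<alpha> 1 n) ^ K = 2 powr (real K * lam n)" by (simp add: powr_power)
  qed
  also have "\<dots> = 2 powr (real K * S N)" unfolding S_def
    by (simp add: powr_sum sum_distrib_left)
  finally have pr: "(\<Prod>n=1..N. norm (\<alpha> 1 n) ^ K) = 2 powr (real K * S N)" .
  have "(2 powr Z N * 2 powr (real K * S N)) ^ (D * Dprod d N) = 2 powr W N"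
    unfolding W_def Dp_def by (simp add: powr_add[symmetric] powr_power mult.assoc add.commute)
  then show ?thesis unfolding termf_def pr Z_def[symmetric] by simp
qed

end

locale L32H = L32 +
  fixes \<eta> :: real and N0 :: nat
  assumes eta_pos: "\<eta> > 0" and H: "\<And>N. N \<ge> N0 \<Longrightarrow> termf N \<ge> \<eta>"
begin

definition "\<omega> m = real (m + 1) powr (-(1 + \<epsilon> / 2))"
definition "\<Omega> = (\<Sum>m. \<omega> m)"
definition "c3 = log 2 (2 * B * \<Omega> / \<eta>)"

lemma \<omega>_summable: "summable \<omega>"
proof -
  have "summable (\<lambda>m. real m powr (-(1 + \<epsilon> / 2)))"
    using pos by (subst summable_real_powr_iff) simp
  then have "summable (\<lambda>m. real (m + 1) powr (-(1 + \<epsilon> / 2)))"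
    using summable_iff_shift[of "\<lambda>m. real m powr (-(1 + \<epsilon> / 2))" 1] by simp
  then show ?thesis unfolding \<omega>_def by simp
qed

lemma \<omega>_nonneg: "\<omega> m \<ge> 0" unfolding \<omega>_def by simp

lemma \<Omega>_pos: "\<Omega> > 0"
proof -
  have "\<omega> 0 \<le> \<Omega>" unfolding \<Omega>_def
    using sum_le_suminf[OF \<omega>_summable, of "{0}"] \<omega>_nonneg by auto
  moreover have "\<omega> 0 = 1" unfolding \<omega>_def by simp
  ultimately show ?thesis by simp
qed

lemma witness:
  assumes N: "N \<ge> N0"
  shows "\<exists>m. lam (m + N + 1) - 2 * lam (m + N + 1) powr a - (1 + \<epsilon> / 2) * log 2 (real (m + 1)) \<le> W N + c3"
proof (rule ccontr)
  assume "\<not> ?thesis"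
  then have A: "\<And>m. lam (m + N + 1) - 2 * lam (m + N + 1) powr a - (1 + \<epsilon> / 2) * log 2 (real (m + 1)) > W N + c3"
    by (meson not_le)
  define K' where "K' = \<eta> / (2 * B * \<Omega>) / 2 powr W N"
  have BP: "B > 0" using B_pos by simp
  have K'pos: "K' > 0" unfolding K'_def using eta_pos BP \<Omega>_pos by simp
  have um: "u (m + N + 1) \<le> \<omega> m * K'" for m
  proof -
    have "2 * lam (m + N + 1) powr a - lam (m + N + 1) \<le> -((1 + \<epsilon> / 2) * log 2 (real (m + 1))) - W N - c3"
      using A[of m] by linarith
    then have "u (m + N + 1) \<le> 2 powr (-((1 + \<epsilon> / 2) * log 2 (real (m + 1))) - W N - c3)"
      unfolding u_def by (intro powr_mono) auto
    also have "\<dots> = 2 powr (-((1 + \<epsilon> / 2) * log 2 (real (m + 1)))) / 2 powr (W N) / 2 powr c3"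
      by (simp only: powr_diff)
    also have "\<dots> = \<omega> m / 2 powr (W N) / (2 * B * \<Omega> / \<eta>)"
    proof -
      have "2 powr (-((1 + \<epsilon> / 2) * log 2 (real (m + 1)))) = (2 powr log 2 (real (m + 1))) powr (-(1 + \<epsilon> / 2))"
        by (subst powr_powr) (simp add: algebra_simps)
      moreover have e0: "2 powr log 2 (real (m + 1)) = real (m + 1)" by simp
      ultimately have e1: "2 powr (-((1 + \<epsilon> / 2) * log 2 (real (m + 1)))) = \<omega> m" unfolding \<omega>_def
        by (simp only:)
      have e2: "2 powr c3 = 2 * B * \<Omega> / \<eta>" unfolding c3_def
        using BP \<Omega>_pos eta_pos by simp
      show ?thesis by (simp only: e1 e2)
    qed
    also have "\<dots> = \<omega> m * K'" unfolding K'_def using BP \<Omega>_pos eta_pos by simp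
    finally show ?thesis .
  qed
  have "T N \<le> (\<Sum>m. \<omega> m * K')" unfolding T_def
    by (intro suminf_le um T_summable summable_mult2 \<omega>_summable)
  also have "\<dots> = \<Omega> * K'" unfolding \<Omega>_def by (simp add: suminf_mult2[OF \<omega>_summable])
  also have "\<dots> = \<eta> / (2 * B) / 2 powr W N" unfolding K'_def using \<Omega>_pos by simp
  finally have T1: "T N \<le> \<eta> / (2 * B) / 2 powr W N" .
  have "\<eta> \<le> norm (gamma K \<beta> b \<alpha> N) * 2 powr W N" using H[OF N] termf_eq by simp
  also have "\<dots> \<le> B * T N * 2 powr W N" using gamma_bound by (intro mult_right_mono) auto
  finally have "\<eta> / (B * 2 powr W N) \<le> T N" using BP by (simp add: field_simps)
  with T1 have "\<eta> / (B * 2 powr W N) \<le> \<eta> / (2 * B) / 2 powr W N" by simp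
  then show False using eta_pos BP by (simp add: field_simps)
qed

end

lemma pow2_ge_sq: "4 \<le> r \<Longrightarrow> (r::nat)^2 \<le> 2^r"
proof (induction r rule: dec_induct)
  case base then show ?case by simp
next
  case (step r)
  have "(Suc r)^2 = r^2 + 2*r + 1" by (simp add: power2_eq_square)
  also have "\<dots> \<le> 2 * r^2"
  proof -
    have "4 * r \<le> r * r" using step(1) by (intro mult_right_mono) auto
    then show ?thesis unfolding power2_eq_square using step(1) by linarith
  qed
  also have "\<dots> \<le> 2 * 2^r" using step(3) by simp
  finally show ?case by simp
qed

lemma suc_le_pow: "Suc k \<le> 2^k"
  by (induction k) auto

lemma coef1: fixes \<Theta> :: real assumes "\<Theta> \<ge> 0" "r \<ge> 1"
  shows "(1/2 + real r * \<Theta>) / 2^(r-1) \<le> 1 + \<Theta>"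
proof -
  obtain k where k: "r = Suc k" using assms(2) by (cases r) auto
  have "Suc k \<le> 2^k" by (rule suc_le_pow)
  then have "real (Suc k) \<le> real (2^k)" by (simp only: of_nat_le_iff)
  then have r2: "real r \<le> 2^(r-1)" unfolding k by simp
  have p1: "(1::real) \<le> 2^(r-1)" by simp
  have "(1/2 + real r * \<Theta>) \<le> (1 + \<Theta>) * 2^(r-1)"
  proof -
    have "real r * \<Theta> \<le> 2^(r-1) * \<Theta>" using r2 assms(1) by (intro mult_right_mono) auto
    moreover have "1/2 \<le> (2::real)^(r-1)" using p1 by linarith
    ultimately show ?thesis by (simp add: algebra_simps)
  qed
  then show ?thesis by (simp add: divide_le_eq)
qed

lemma coef2: fixes \<Theta> :: real assumes "\<Theta> \<ge> 0" "real r \<ge> 8 * \<Theta> + 4"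
  shows "(1/2 + real r * \<Theta>) / 2^(r-1) \<le> 1/4"
proof -
  have r4: "r \<ge> 4" using assms by simp
  have "real (r^2) \<le> real (2^r)" using pow2_ge_sq[OF r4] by (simp only: of_nat_le_iff)
  then have sq: "real r * real r \<le> 2^r" by (simp add: power2_eq_square)
  have "real r * real r \<ge> real r * (8 * \<Theta> + 4)" using assms by (intro mult_left_mono) auto
  then have "4 * (1 + 2 * real r * \<Theta>) \<le> 2^r" using sq r4 by (simp add: algebra_simps)
  moreover have "(2::real)^r = 2 * 2^(r-1)"
  proof -
    obtain k where k: "r = Suc k" using r4 by (cases r) auto
    show ?thesis unfolding k by simp
  qed
  ultimately have "4 * (1/2 + real r * \<Theta>) \<le> 2^(r-1)" by (simp add: algebra_simps)
  then show ?thesis by (simp add: divide_le_eq)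
qed

lemma pow2_powr: "((2::real) ^ k) powr p = (2 powr p) ^ k"
proof -
  have "(2::real) ^ k = 2 powr (real k)" by (simp add: powr_realpow)
  then have "((2::real) ^ k) powr p = 2 powr (real k * p)" by (simp add: powr_powr)
  also have "\<dots> = (2 powr p) ^ k" by (simp add: powr_power)
  finally show ?thesis .
qed

context L32 begin

lemma f_eq: "n \<ge> 1 \<Longrightarrow> norm (\<alpha> 1 n) powr (1 / (real D ^ n * real (Pprod K d n))) = 2 powr L n"
proof -
  assume n: "n \<ge> 1"
  have "norm (\<alpha> 1 n) powr (1 / (real D ^ n * real (Pprod K d n))) = (2 powr lam n) powr (1 / E n)"
    using x_eq[OF n] unfolding x_def E_def P_def by simp
  also have "\<dots> = 2 powr L n" unfolding L_def by (subst powr_powr) simp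
  finally show ?thesis .
qed

definition "fseq n = ereal (norm (\<alpha> 1 n) powr (1 / (real D ^ n * real (Pprod K d n))))"

lemma ev_upper: "\<forall>\<^sub>F n in sequentially. L n < log 2 (A2 + 1)"
proof -
  have "limsup fseq < ereal (A2 + 1)" using h4 unfolding fseq_def by simp
  then have "\<forall>\<^sub>F n in sequentially. fseq n < ereal (A2 + 1)" by (rule Limsup_lessD)
  moreover have "\<forall>\<^sub>F n in sequentially. n \<ge> 1" by (rule eventually_ge_at_top)
  ultimately show ?thesis
  proof eventually_elim
    case (elim n)
    then have "2 powr L n < A2 + 1" using f_eq[of n] unfolding fseq_def by simp
    then have "log 2 (2 powr L n) < log 2 (A2 + 1)" using pos by (subst log_less_cancel_iff) auto
    then show ?case by simp
  qed
qed

lemma freq_hi: assumes "0 < t2" "t2 < A2" shows "\<exists>\<^sub>F n in sequentially. L n > log 2 t2"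
proof (rule ccontr)
  assume "\<not> ?thesis"
  then have "\<forall>\<^sub>F n in sequentially. \<not> L n > log 2 t2" by (simp add: not_frequently)
  moreover have "\<forall>\<^sub>F n in sequentially. n \<ge> 1" by (rule eventually_ge_at_top)
  ultimately have "\<forall>\<^sub>F n in sequentially. fseq n \<le> ereal t2"
  proof eventually_elim
    case (elim n)
    then have "2 powr L n \<le> 2 powr log 2 t2" by simp
    then have "2 powr L n \<le> t2" using assms by simp
    then show ?case using f_eq[of n] elim unfolding fseq_def by simp
  qed
  then have "limsup fseq \<le> ereal t2" by (rule Limsup_bounded)
  then show False using h4 assms unfolding fseq_def by simp
qed

lemma freq_lo: assumes "A1 < t1" shows "\<exists>\<^sub>F n in sequentially. L n < log 2 t1"
proof (rule ccontr)
  have t1: "t1 > 0" using assms pos by simp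
  assume "\<not> ?thesis"
  then have "\<forall>\<^sub>F n in sequentially. \<not> L n < log 2 t1" by (simp add: not_frequently)
  moreover have "\<forall>\<^sub>F n in sequentially. n \<ge> 1" by (rule eventually_ge_at_top)
  ultimately have "\<forall>\<^sub>F n in sequentially. ereal t1 \<le> fseq n"
  proof eventually_elim
    case (elim n)
    then have "2 powr log 2 t1 \<le> 2 powr L n" by simp
    then have "t1 \<le> 2 powr L n" using t1 by simp
    then show ?case using f_eq[of n] elim unfolding fseq_def by simp
  qed
  then have "ereal t1 \<le> liminf fseq" by (rule Liminf_bounded)
  then show False using h3 assms unfolding fseq_def by simp
qed

lemma S_nonneg: "S n \<ge> 0" unfolding S_def using lam_nonneg by (intro sum_nonneg) auto
lemma s_nonneg: "s n \<ge> 0" unfolding s_def using S_nonneg E_pos[of n] by simp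

lemma S_Suc: "S (Suc n) = S n + lam (Suc n)" unfolding S_def by simp

lemma L_le_s: "n \<ge> 1 \<Longrightarrow> L n \<le> s n"
proof -
  assume n: "n \<ge> 1"
  have "lam n \<le> S n" unfolding S_def using n lam_nonneg
    by (intro member_le_sum) auto
  then show ?thesis unfolding L_def s_def using E_pos[of n] by (simp add: divide_right_mono)
qed

lemma s_Suc: "s (Suc n) = L (Suc n) + E n / E (Suc n) * s n"
proof -
  have "E n / E (Suc n) * (S n / E n) = S n / E (Suc n)" using E_pos[of n] by (simp add: field_simps)
  then show ?thesis unfolding s_def L_def S_Suc by (simp add: add_divide_distrib)
qed

lemma s_bounded: "\<exists>n0 Sb. \<forall>n\<ge>n0. s n \<le> Sb"
proof -
  define \<Lambda> where "\<Lambda> = log 2 (A2 + 1)"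
  obtain n1 where n1: "\<And>n. n \<ge> n1 \<Longrightarrow> L n < \<Lambda>"
    using ev_upper unfolding \<Lambda>_def eventually_at_top_linorder by blast
  define n0 where "n0 = max n1 1"
  define M where "M = max (s n0) (2 * \<Lambda>)"
  have "s n \<le> M" if "n \<ge> n0" for n
    using that
  proof (induction n rule: dec_induct)
    case base then show ?case unfolding M_def by simp
  next
    case (step n)
    have n: "n \<ge> 1" using step(1) unfolding n0_def by simp
    have "E n / E (Suc n) \<le> 1/2" using E_double[OF n] E_pos[of n] by (simp add: divide_le_eq)
    then have h: "E n / E (Suc n) * s n \<le> 1/2 * M"
      using step(3) s_nonneg[of n] E_pos[of n] E_pos[of "Suc n"] by (intro mult_mono) auto
    have "L (Suc n) < \<Lambda>" using n1 step(1) unfolding n0_def by simp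
    moreover have "\<Lambda> \<le> M / 2" unfolding M_def by simp
    ultimately show ?case unfolding s_Suc using h by linarith
  qed
  then show ?thesis by blast
qed

definition "e1 N = real D * Dp N * Z N / E (Suc N)"

lemma Z_eq: "Z N = real D powr (c * real N) * P N powr c"
  unfolding Z_def P_def Pprod_def by (simp add: prod_powr_distrib)

lemma W_le: "N \<ge> 1 \<Longrightarrow> W N \<le> E (Suc N) * (s N + e1 N)"
proof -
  assume N: "N \<ge> 1"
  have "real D * Dp N * real K * S N \<le> E (Suc N) * s N"
  proof -
    have "E (Suc N) * s N = real D * (real K * Dp N + real (d N)) * S N"
      unfolding s_def E_Suc[OF N] using E_pos[of N] by simp
    moreover have "real D * Dp N * real K \<le> real D * (real K * Dp N + real (d N))"
      by (simp add: algebra_simps)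
    ultimately show ?thesis using S_nonneg[of N] by (simp add: mult_right_mono)
  qed
  moreover have "real D * Dp N * Z N = E (Suc N) * e1 N"
    unfolding e1_def using E_pos[of "Suc N"] by simp
  ultimately show ?thesis unfolding W_def by (simp add: algebra_simps)
qed

lemma Z_nonneg: "Z N \<ge> 0" unfolding Z_def by (intro mult_nonneg_nonneg prod_nonneg) auto

lemma e1_nonneg: "e1 N \<ge> 0" unfolding e1_def using Z_nonneg[of N] E_pos[of "Suc N"] Dp_ge1[of N]
  by (intro divide_nonneg_nonneg mult_nonneg_nonneg) auto

lemma e1_le_P: "N \<ge> 1 \<Longrightarrow> e1 N \<le> P N powr (c - 1)"
proof -
  assume N: "N \<ge> 1"
  have DN: "real D powr (c * real N) \<le> real D ^ N"
  proof -
    have "real D powr (c * real N) \<le> real D powr (real N)"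
    proof (intro powr_mono)
      show "c * real N \<le> real N" using hc mult_right_mono[of c 1 "real N"] by simp
    qed (use DK in auto)
    then show ?thesis using DK by (simp add: powr_realpow)
  qed
  have F: "Dp N \<le> real K * Dp N + real (d N)"
  proof -
    have "Dp N \<le> real K * Dp N" using DK Dp_ge1[of N] by (simp add: mult_le_cancel_right1)
    then show ?thesis by simp
  qed
  have Pp: "P N > 0" using P_pos[of N] by simp
  have "e1 N = (real D * Dp N * (real D powr (c * real N) * P N powr c)) /
      (real D ^ N * P N * (real D * (real K * Dp N + real (d N))))"
    unfolding e1_def Z_eq E_Suc[OF N] by (simp add: E_def)
  also have "\<dots> \<le> (real D * (real K * Dp N + real (d N)) * (real D ^ N * P N powr c)) /
      (real D ^ N * P N * (real D * (real K * Dp N + real (d N))))"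
  proof (rule divide_right_mono)
    show "0 \<le> real D ^ N * P N * (real D * (real K * Dp N + real (d N)))"
      using P_pos[of N] Dp_ge1[of N] by (intro mult_nonneg_nonneg) auto
    show "real D * Dp N * (real D powr (c * real N) * P N powr c)
      \<le> real D * (real K * Dp N + real (d N)) * (real D ^ N * P N powr c)"
      using DN F Dp_ge1[of N] DK by (intro mult_mono) auto
  qed
  also have "\<dots> = P N powr c / P N"
  proof -
    have gen: "\<And>F A B Pv::real. F \<noteq> 0 \<Longrightarrow> A \<noteq> 0 \<Longrightarrow> Pv \<noteq> 0 \<Longrightarrow> F * (A * B) / (A * Pv * F) = B / Pv"
      by (simp add: field_simps)
    have "real D * (real K * Dp N + real (d N)) \<noteq> 0" using DK factor_ge2[OF N] by simp
    moreover have "real D ^ N \<noteq> 0" using DK by simp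
    ultimately show ?thesis using gen Pp by simp
  qed
  also have "\<dots> = P N powr (c - 1)" using Pp by (simp add: powr_diff)
  finally show ?thesis .
qed

definition "q = 2 powr (max a c - 1)"

lemma q_pos: "q > 0" unfolding q_def by simp
lemma q_lt1: "q < 1" unfolding q_def using ord hc by (intro powr_less_one) auto
lemma q_ge_half: "q \<ge> 1/2"
proof -
  have "2 powr (-1) \<le> q" unfolding q_def using pos hc by (intro powr_mono) auto
  then show ?thesis by (simp add: powr_minus_divide)
qed

lemma q_pow_ge: "bb \<le> max a c \<Longrightarrow> (2 powr (bb - 1)) ^ N \<le> q ^ N"
  unfolding q_def by (intro power_mono powr_mono) auto

lemma e1_le: "N \<ge> 1 \<Longrightarrow> e1 N \<le> 2 * q ^ N"
proof -
  assume N: "N \<ge> 1"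
  have "P N \<ge> 2 ^ (N - 1)" using P_ge_pow[of "N - 1"] N by simp
  then have "P N powr (c - 1) \<le> (2 ^ (N - 1)) powr (c - 1)"
    using hc by (intro powr_mono2') auto
  also have "(2 ^ (N - 1)) powr (c - 1) = (2 powr (c - 1)) ^ (N - 1)"
    by (rule pow2_powr)
  also have "\<dots> \<le> q ^ (N - 1)" by (rule q_pow_ge) simp
  also have "\<dots> \<le> 2 * q ^ N"
  proof -
    obtain k where k: "N = Suc k" using N by (cases N) auto
    have "1 * q ^ k \<le> (2 * q) * q ^ k" using q_ge_half q_pos by (intro mult_right_mono) auto
    then show ?thesis unfolding k by (simp add: mult.assoc)
  qed
  finally show ?thesis using e1_le_P[OF N] by simp
qed

lemma invE_le: "1 / E (Suc N) \<le> q ^ N"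
proof -
  have "1 / E (Suc N) \<le> 1 / 2 ^ N" using E_ge_pow[of N] E_pos[of "Suc N"] by (intro divide_left_mono) auto
  also have "\<dots> = (1/2) ^ N" by (simp add: power_divide)
  also have "\<dots> \<le> q ^ N" using q_ge_half by (intro power_mono) auto
  finally show ?thesis .
qed

lemma Epow_le: "E (Suc N) powr (a - 1) \<le> q ^ N"
proof -
  have "E (Suc N) powr (a - 1) \<le> (2 ^ N) powr (a - 1)"
    using ord E_ge_pow[of N] by (intro powr_mono2') auto
  also have "(2 ^ N) powr (a - 1) = (2 powr (a - 1)) ^ N"
    by (rule pow2_powr)
  also have "\<dots> \<le> q ^ N" by (rule q_pow_ge) simp
  finally show ?thesis .
qed

lemma s_step_bound: "N \<ge> 1 \<Longrightarrow> s (Suc N) \<le> s N + e1 N + (lam (Suc N) - W N) / E (Suc N)"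
proof -
  assume N: "N \<ge> 1"
  have EN: "E (Suc N) = E N * (real D * (real K * Dp N + real (d N)))" by (rule E_Suc[OF N])
  have "(1 + real D * Dp N * real K) * S N \<le> E (Suc N) * s N"
  proof -
    have "E (Suc N) * s N = real D * (real K * Dp N + real (d N)) * S N"
      unfolding s_def EN using E_pos[of N] by simp
    moreover have "1 + real D * Dp N * real K \<le> real D * (real K * Dp N + real (d N))"
    proof -
      have "real D * real (d N) \<ge> 1 * 1" using DK d_ge1[OF N] by (intro mult_mono) auto
      then show ?thesis by (simp add: algebra_simps)
    qed
    ultimately show ?thesis using S_nonneg[of N] by (simp add: mult_right_mono)
  qed
  moreover have "real D * Dp N * Z N = E (Suc N) * e1 N"
    unfolding e1_def using E_pos[of "Suc N"] by simp
  ultimately have "S N + lam (Suc N) \<le> E (Suc N) * s N + E (Suc N) * e1 N + (lam (Suc N) - W N)"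
    unfolding W_def by (simp add: algebra_simps)
  then have "(S N + lam (Suc N)) / E (Suc N) \<le> (E (Suc N) * s N + E (Suc N) * e1 N + (lam (Suc N) - W N)) / E (Suc N)"
    using E_pos[of "Suc N"] by (intro divide_right_mono) auto
  also have "\<dots> = s N + e1 N + (lam (Suc N) - W N) / E (Suc N)"
    using E_pos[of "Suc N"] by (simp add: field_simps)
  finally show ?thesis unfolding s_def[of "Suc N"] S_Suc .
qed

end

context L32H begin

definition "\<theta>0 = (\<epsilon> / 2) / (1 + \<epsilon>)"
definition "\<Theta> = 2 / \<theta>0"
definition "C5 = \<bar>c3\<bar> + 2 * C4"

lemma \<theta>0_pos: "\<theta>0 > 0" unfolding \<theta>0_def using pos by simp
lemma \<Theta>_pos: "\<Theta> > 0" unfolding \<Theta>_def using \<theta>0_pos by simp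
lemma C5_nonneg: "C5 \<ge> 0" unfolding C5_def using C4(1) by simp

lemma lam_bound:
  assumes wit: "lam (m + N + 1) - 2 * lam (m + N + 1) powr a - (1 + \<epsilon> / 2) * log 2 (real (m + 1)) \<le> W N + c3"
  shows "lam (m + N + 1) \<le> \<Theta> * (W N + C5)"
proof -
  define n where "n = m + N + 1"
  define l where "l = lam n"
  have n1: "n \<ge> 1" unfolding n_def by simp
  have l0: "l \<ge> 0" unfolding l_def using lam_nonneg[OF n1] .
  have a1: "2 * l powr a \<le> \<theta>0 / 2 * l + 2 * C4"
  proof -
    have "l powr a \<le> tt * l + C4" using C4(2)[OF l0] .
    moreover have "tt = \<theta>0 / 4" unfolding tt_def \<theta>0_def using pos by (simp add: field_simps)
    ultimately show ?thesis by (simp add: algebra_simps)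
  qed
  have b1: "(1 + \<epsilon> / 2) * log 2 (real (m + 1)) \<le> (1 - \<theta>0) * l"
  proof -
    have "log 2 (real (m + 1)) \<le> log 2 (real n)" unfolding n_def by simp
    moreover have "log 2 (real n) \<ge> 0" using n1 by simp
    moreover have "(1 + \<epsilon> / 2) = (1 - \<theta>0) * (1 + \<epsilon>)" unfolding \<theta>0_def using pos by (simp add: field_simps)
    moreover have "(1 + \<epsilon>) * log 2 (real n) \<le> l" unfolding l_def using lam_ge[OF n1] .
    moreover have "1 - \<theta>0 \<ge> 0" unfolding \<theta>0_def using pos by (simp add: field_simps)
    ultimately have "(1 + \<epsilon> / 2) * log 2 (real (m + 1)) \<le> (1 - \<theta>0) * ((1 + \<epsilon>) * log 2 (real n))"
      by (smt (verit, best) mult.assoc mult_left_mono pos(2))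
    also have "\<dots> \<le> (1 - \<theta>0) * l" using \<open>(1 + \<epsilon>) * log 2 (real n) \<le> l\<close> \<open>1 - \<theta>0 \<ge> 0\<close>
      by (intro mult_left_mono) auto
    finally show ?thesis .
  qed
  have w: "l - 2 * l powr a - (1 + \<epsilon> / 2) * log 2 (real (m + 1)) \<le> W N + c3"
    using wit unfolding l_def n_def .
  have id1: "(1 - \<theta>0) * l = l - \<theta>0 * l" by (simp add: algebra_simps)
  have id2: "\<theta>0 / 2 * l = \<theta>0 * l / 2" by simp
  have "\<theta>0 / 2 * l \<le> W N + C5" using w a1 b1 id1 id2 unfolding C5_def by linarith
  then have "\<Theta> * (\<theta>0 / 2 * l) \<le> \<Theta> * (W N + C5)" using \<Theta>_pos by (intro mult_left_mono) auto
  moreover have "\<Theta> * (\<theta>0 / 2 * l) = l" unfolding \<Theta>_def using \<theta>0_pos by (simp add: field_simps)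
  ultimately have "l \<le> \<Theta> * (W N + C5)" by linarith
  then show ?thesis unfolding l_def n_def .
qed

definition "nb = (SOME n0. \<exists>Sb. \<forall>n\<ge>n0. s n \<le> Sb)"
definition "Sb = (SOME Sb. \<forall>n\<ge>nb. s n \<le> Sb)"

lemma Sb: "n \<ge> nb \<Longrightarrow> s n \<le> Sb"
proof -
  have "\<exists>n0 Sb. \<forall>n\<ge>n0. s n \<le> Sb" by (rule s_bounded)
  then have "\<exists>Sb. \<forall>n\<ge>nb. s n \<le> Sb" unfolding nb_def by (rule someI_ex)
  then have "\<forall>n\<ge>nb. s n \<le> Sb" unfolding Sb_def by (rule someI_ex)
  then show "n \<ge> nb \<Longrightarrow> s n \<le> Sb" by blast
qed

lemma Sb_nonneg: "Sb \<ge> 0" using Sb[of nb] s_nonneg[of nb] by simp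

definition "G = \<Theta> * (Sb + 2 + C5)"
definition "j0 = nat \<lceil>8 * \<Theta> + 4\<rceil>"
definition "c3' = \<bar>c3\<bar> + (1 + \<epsilon> / 2) * log 2 (real j0)"
definition "Ce = 4 + C5 + c3' + 2 * G powr a"
definition "e N = Ce * q ^ N"
definition "R = 1 + \<Theta>"
definition "N1 = max (max N0 nb) 1"

lemma j0_ge: "j0 \<ge> 4" unfolding j0_def using \<Theta>_pos by linarith
lemma G_nonneg: "G \<ge> 0" unfolding G_def using \<Theta>_pos Sb_nonneg C5_nonneg by simp
lemma c3'_nonneg: "c3' \<ge> 0" unfolding c3'_def using j0_ge pos by simp
lemma Ce_ge: "Ce \<ge> 4 + C5" unfolding Ce_def using c3'_nonneg by simp
lemma e_nonneg: "e N \<ge> 0" unfolding e_def using Ce_ge C5_nonneg q_pos by simp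
lemma e_Suc: "e (Suc N) = q * e N" unfolding e_def by simp

lemma qpow_le1: "q ^ N \<le> 1" using q_pos q_lt1 by (simp add: power_le_one)

lemma W_C5_le: "N \<ge> 1 \<Longrightarrow> W N + C5 \<le> E (Suc N) * (s N + e N)"
proof -
  assume N: "N \<ge> 1"
  have "W N \<le> E (Suc N) * (s N + e1 N)" by (rule W_le[OF N])
  moreover have "C5 \<le> E (Suc N) * (C5 * q ^ N)"
  proof -
    have "1 \<le> q ^ N * E (Suc N)" using invE_le[of N] E_pos[of "Suc N"] by (simp add: divide_le_eq)
    then have "1 \<le> E (Suc N) * q ^ N" by (simp add: mult.commute)
    then have "C5 * 1 \<le> C5 * (E (Suc N) * q ^ N)" using C5_nonneg by (intro mult_left_mono) auto
    then show ?thesis by (simp add: algebra_simps)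
  qed
  moreover have "e1 N + C5 * q ^ N \<le> e N"
  proof -
    have "e1 N + C5 * q ^ N \<le> 2 * q ^ N + C5 * q ^ N" using e1_le[OF N] by simp
    also have "\<dots> = (2 + C5) * q ^ N" by (simp add: algebra_simps)
    also have "\<dots> \<le> Ce * q ^ N" using Ce_ge q_pos by (intro mult_right_mono) auto
    finally show ?thesis unfolding e_def .
  qed
  moreover have "E (Suc N) * (s N + e1 N) + E (Suc N) * (C5 * q ^ N) = E (Suc N) * (s N + (e1 N + C5 * q ^ N))"
    by (simp add: algebra_simps)
  moreover have "E (Suc N) * (s N + (e1 N + C5 * q ^ N)) \<le> E (Suc N) * (s N + e N)"
    using calculation(3) E_pos[of "Suc N"] by (intro mult_left_mono) auto
  ultimately show ?thesis by linarith
qed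

lemma good_case:
  assumes N: "N \<ge> N1" and mj: "m + 1 \<le> j0"
    and wit: "lam (m + N + 1) - 2 * lam (m + N + 1) powr a - (1 + \<epsilon> / 2) * log 2 (real (m + 1)) \<le> W N + c3"
  shows "s (Suc N) \<le> s N + e N"
proof -
  have N1': "N \<ge> 1" "N \<ge> nb" "N \<ge> N0" using N unfolding N1_def by auto
  define n where "n = m + N + 1"
  define E' where "E' = E (Suc N)"
  have E'1: "E' \<ge> 1" unfolding E'_def by (rule E_pos)
  have n1: "n \<ge> 1" unfolding n_def by simp
  have l0: "lam n \<ge> 0" using lam_nonneg[OF n1] .
  have lb: "lam n \<le> \<Theta> * (W N + C5)" using lam_bound[OF wit] unfolding n_def .
  have WC: "W N + C5 \<le> E' * (Sb + 2 + C5)"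
  proof -
    have "W N \<le> E' * (s N + e1 N)" unfolding E'_def by (rule W_le[OF N1'(1)])
    moreover have "s N + e1 N \<le> Sb + 2"
      using Sb[OF N1'(2)] e1_le[OF N1'(1)] qpow_le1[of N] by linarith
    moreover have "C5 \<le> E' * C5" using E'1 C5_nonneg by (simp add: mult_le_cancel_right1)
    ultimately have "W N + C5 \<le> E' * (Sb + 2) + E' * C5"
      using E'1 by (smt (verit) mult_left_mono)
    then show ?thesis by (simp add: algebra_simps)
  qed
  have lG: "lam n \<le> E' * G"
  proof -
    have "lam n \<le> \<Theta> * (E' * (Sb + 2 + C5))" using lb WC \<Theta>_pos
      by (smt (verit) mult_left_mono)
    then show ?thesis unfolding G_def by (simp add: algebra_simps)
  qed
  have lpa: "lam n powr a \<le> E' powr a * G powr a"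
  proof -
    have "lam n powr a \<le> (E' * G) powr a" using lG l0 pos by (intro powr_mono2) auto
    also have "\<dots> = E' powr a * G powr a" using E'1 G_nonneg by (simp add: powr_mult)
    finally show ?thesis .
  qed
  have logj: "(1 + \<epsilon> / 2) * log 2 (real (m + 1)) \<le> (1 + \<epsilon> / 2) * log 2 (real j0)"
    using mj pos by (intro mult_left_mono) auto
  have "lam n \<le> W N + c3 + 2 * lam n powr a + (1 + \<epsilon> / 2) * log 2 (real (m + 1))"
    using wit unfolding n_def by linarith
  then have "lam n - W N \<le> c3' + 2 * (E' powr a * G powr a)"
    using lpa logj unfolding c3'_def by linarith
  moreover have "lam (Suc N) \<le> lam n" unfolding n_def by (intro lam_mono) auto
  ultimately have num: "lam (Suc N) - W N \<le> c3' + 2 * G powr a * E' powr a" by (simp add: algebra_simps)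
  have "(lam (Suc N) - W N) / E' \<le> (c3' + 2 * G powr a * E' powr a) / E'"
    using num E'1 by (intro divide_right_mono) auto
  also have "\<dots> = c3' * (1 / E') + 2 * G powr a * (E' powr a / E')"
    by (simp add: add_divide_distrib)
  also have "E' powr a / E' = E' powr (a - 1)" using E'1 by (simp add: powr_diff)
  also have "c3' * (1 / E') + 2 * G powr a * E' powr (a - 1) \<le> c3' * q ^ N + 2 * G powr a * q ^ N"
  proof -
    have "c3' * (1 / E') \<le> c3' * q ^ N" using invE_le[of N] c3'_nonneg unfolding E'_def
      by (intro mult_left_mono) auto
    moreover have "2 * G powr a * E' powr (a - 1) \<le> 2 * G powr a * q ^ N"
      using Epow_le[of N] unfolding E'_def by (intro mult_left_mono) auto
    ultimately show ?thesis by linarith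
  qed
  finally have t2: "(lam (Suc N) - W N) / E' \<le> c3' * q ^ N + 2 * G powr a * q ^ N" .
  have "s (Suc N) \<le> s N + e1 N + (lam (Suc N) - W N) / E'"
    unfolding E'_def by (rule s_step_bound[OF N1'(1)])
  also have "\<dots> \<le> s N + 2 * q ^ N + (c3' * q ^ N + 2 * G powr a * q ^ N)"
    using t2 e1_le[OF N1'(1)] by linarith
  also have "\<dots> = s N + (2 + c3' + 2 * G powr a) * q ^ N" by (simp add: algebra_simps)
  also have "\<dots> \<le> s N + e N" unfolding e_def Ce_def using C5_nonneg q_pos
    by (intro add_left_mono mult_right_mono) auto
  finally show ?thesis .
qed

lemma S_shift_le:
  assumes "N \<ge> 1" "r \<le> j" and lm: "\<And>k. N < k \<Longrightarrow> k \<le> N + j \<Longrightarrow> lam k \<le> lv"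
  shows "S (N + r) \<le> S N + real r * lv"
  using assms(2)
proof (induction r)
  case 0 then show ?case by simp
next
  case (Suc r)
  have "S (N + Suc r) = S (N + r) + lam (Suc (N + r))" by (simp add: S_Suc)
  also have "\<dots> \<le> S N + real r * lv + lv" using Suc lm[of "Suc (N + r)"] by simp
  finally show ?case by (simp add: algebra_simps)
qed

lemma bad_case:
  assumes N: "N \<ge> N1"
    and wit: "lam (m + N + 1) - 2 * lam (m + N + 1) powr a - (1 + \<epsilon> / 2) * log 2 (real (m + 1)) \<le> W N + c3"
    and r: "1 \<le> r" "r \<le> m + 1"
  shows "s (N + r) \<le> (s N + e N) * ((1/2 + real r * \<Theta>) / 2^(r-1))"
proof -
  have N1': "N \<ge> 1" "N \<ge> nb" "N \<ge> N0" using N unfolding N1_def by auto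
  define n where "n = m + N + 1"
  define E' where "E' = E (Suc N)"
  have E'1: "E' \<ge> 1" unfolding E'_def by (rule E_pos)
  have se: "s N + e N \<ge> 0" using s_nonneg e_nonneg by (simp add: add_nonneg_nonneg)
  have lb: "lam n \<le> \<Theta> * (E' * (s N + e N))"
    using lam_bound[OF wit] W_C5_le[OF N1'(1)] \<Theta>_pos unfolding n_def E'_def
    by (smt (verit) mult_left_mono)
  have SN: "S (N + r) \<le> S N + real r * lam n"
  proof (rule S_shift_le[OF N1'(1) r(2)])
    fix k assume "N < k" "k \<le> N + (m + 1)"
    then show "lam k \<le> lam n" unfolding n_def by (intro lam_mono) auto
  qed
  have S0: "S N \<le> s N * E' / 2"
  proof -
    have "S N = s N * E N" unfolding s_def using E_pos[of N] by simp
    also have "\<dots> \<le> s N * (E' / 2)" unfolding E'_def using E_double[OF N1'(1)] s_nonneg[of N]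
      by (intro mult_left_mono) auto
    finally show ?thesis by simp
  qed
  have EN: "E (N + r) \<ge> 2^(r-1) * E'"
  proof -
    have "E (Suc N + (r - 1)) \<ge> 2^(r-1) * E (Suc N)" by (rule E_shift) simp
    moreover have "Suc N + (r - 1) = N + r" using r by simp
    ultimately show ?thesis unfolding E'_def by simp
  qed
  have num: "S (N + r) \<le> E' * (s N + e N) * (1/2 + real r * \<Theta>)"
  proof -
    have "S (N + r) \<le> s N * E' / 2 + real r * (\<Theta> * (E' * (s N + e N)))"
      using SN S0 lb by (smt (verit) mult_left_mono of_nat_0_le_iff)
    also have "s N * E' / 2 \<le> (s N + e N) * E' / 2" using e_nonneg[of N] E'1
      by (intro divide_right_mono mult_right_mono) auto
    finally show ?thesis by (simp add: algebra_simps add_divide_distrib)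
  qed
  have pos2: "(0::real) < 2^(r-1) * E'" using E'1 by simp
  have "s (N + r) = S (N + r) / E (N + r)" unfolding s_def ..
  also have "\<dots> \<le> S (N + r) / (2^(r-1) * E')"
    using S_nonneg[of "N + r"] EN pos2 by (intro divide_left_mono) auto
  also have "\<dots> \<le> E' * (s N + e N) * (1/2 + real r * \<Theta>) / (2^(r-1) * E')"
    using num pos2 by (intro divide_right_mono) auto
  also have "\<dots> = (s N + e N) * ((1/2 + real r * \<Theta>) / 2^(r-1))"
    using E'1 by (simp add: field_simps)
  finally show ?thesis .
qed

definition "Step N j \<longleftrightarrow> j \<ge> 1 \<and> (\<forall>r. 1 \<le> r \<and> r \<le> j \<longrightarrow> s (N + r) \<le> R * (s N + e N))
   \<and> s (N + j) \<le> s N + e N \<and> (j = 1 \<or> s (N + j) \<le> (s N + e N) / 4)"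

lemma R_ge1: "R \<ge> 1" unfolding R_def using \<Theta>_pos by simp

lemma step_exists: "N \<ge> N1 \<Longrightarrow> \<exists>j. Step N j"
proof -
  assume N: "N \<ge> N1"
  have N0': "N \<ge> N0" using N unfolding N1_def by simp
  obtain m where wit: "lam (m + N + 1) - 2 * lam (m + N + 1) powr a - (1 + \<epsilon> / 2) * log 2 (real (m + 1)) \<le> W N + c3"
    using witness[OF N0'] by blast
  have se: "s N + e N \<ge> 0" using s_nonneg e_nonneg by (simp add: add_nonneg_nonneg)
  show ?thesis
  proof (cases "m + 1 \<le> j0")
    case True
    have g: "s (Suc N) \<le> s N + e N" by (rule good_case[OF N True wit])
    have "s (N + 1) \<le> R * (s N + e N)" using g R_ge1 se
      by (smt (verit) mult_right_mono mult_cancel_right1 Suc_eq_plus1)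
    then have "Step N 1" unfolding Step_def using g by auto
    then show ?thesis by blast
  next
    case False
    define j where "j = m + 1"
    have A: "s (N + r) \<le> R * (s N + e N)" if "1 \<le> r" "r \<le> j" for r
    proof -
      have "s (N + r) \<le> (s N + e N) * ((1/2 + real r * \<Theta>) / 2^(r-1))"
        using bad_case[OF N wit] that unfolding j_def by simp
      also have "\<dots> \<le> (s N + e N) * R" unfolding R_def
        using coef1[OF _ that(1), of \<Theta>] \<Theta>_pos se by (intro mult_left_mono) auto
      finally show ?thesis by (simp add: mult.commute)
    qed
    have B: "s (N + j) \<le> (s N + e N) / 4"
    proof -
      have "s (N + j) \<le> (s N + e N) * ((1/2 + real j * \<Theta>) / 2^(j-1))"
        using bad_case[OF N wit, of j] unfolding j_def by simp
      also have "\<dots> \<le> (s N + e N) * (1/4)"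
      proof (intro mult_left_mono coef2 se)
        show "\<Theta> \<ge> 0" using \<Theta>_pos by simp
        have "j0 < j" using False unfolding j_def by simp
        then have "real j0 < real j" by simp
        moreover have "8 * \<Theta> + 4 \<le> real j0" unfolding j0_def by linarith
        ultimately show "8 * \<Theta> + 4 \<le> real j" by simp
      qed
      finally show ?thesis by simp
    qed
    have "s (N + j) \<le> s N + e N" using B se by simp
    moreover have "j \<ge> 1" unfolding j_def by simp
    ultimately have "Step N j" unfolding Step_def using A B by auto
    then show ?thesis by blast
  qed
qed

end

context L32 begin

lemma Dp_Suc: "Dp (Suc n) = Dp n * real (d (Suc n))"
  unfolding Dp_def by (simp add: Dprod_Suc)

lemma Dp_inc: "incseq Dp"
proof (rule incseq_SucI)
  fix n
  have "Dp n * 1 \<le> Dp n * real (d (Suc n))" using d_ge1[of "Suc n"] Dp_ge1[of n]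
    by (intro mult_left_mono) auto
  then show "Dp n \<le> Dp (Suc n)" unfolding Dp_Suc by simp
qed

lemma tau_eq: "n \<ge> 1 \<Longrightarrow> E n / E (Suc n) = 1 / (real D * (real K * Dp n + real (d n)))"
  using E_Suc[of n] E_pos[of n] by simp

lemma tau_conv: "convergent (\<lambda>n. E n / E (Suc n))"
proof (cases "\<exists>B. \<forall>n. Dp n \<le> B")
  case True
  then obtain B where B: "\<forall>n. Dp n \<le> B" by blast
  obtain Dst where Dst: "Dp \<longlonglongrightarrow> Dst" using incseq_convergent[OF Dp_inc B] by blast
  have "(\<lambda>n. Dp (Suc n) - Dp n) \<longlonglongrightarrow> Dst - Dst"
    by (intro tendsto_diff LIMSEQ_Suc Dst)
  then have z: "(\<lambda>n. Dp (Suc n) - Dp n) \<longlonglongrightarrow> 0" by simp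
  have "(\<lambda>n. real (d (Suc n)) - 1) \<longlonglongrightarrow> 0"
  proof (rule tendsto_sandwich[OF _ _ tendsto_const z])
    show "\<forall>\<^sub>F n in sequentially. 0 \<le> real (d (Suc n)) - 1" using d_ge1 by simp
    show "\<forall>\<^sub>F n in sequentially. real (d (Suc n)) - 1 \<le> Dp (Suc n) - Dp n"
    proof (intro always_eventually allI)
      fix n
      have "1 * (real (d (Suc n)) - 1) \<le> Dp n * (real (d (Suc n)) - 1)"
        using Dp_ge1[of n] d_ge1[of "Suc n"] by (intro mult_right_mono) auto
      then show "real (d (Suc n)) - 1 \<le> Dp (Suc n) - Dp n" unfolding Dp_Suc by (simp add: algebra_simps)
    qed
  qed
  then have "(\<lambda>n. (real (d (Suc n)) - 1) + 1) \<longlonglongrightarrow> 0 + 1"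
    by (intro tendsto_add tendsto_const)
  then have "(\<lambda>n. real (d (Suc n))) \<longlonglongrightarrow> 1" by simp
  then have d1: "(\<lambda>n. real (d n)) \<longlonglongrightarrow> 1" by (rule LIMSEQ_imp_Suc)
  have "(\<lambda>n. 1 / (real D * (real K * Dp n + real (d n)))) \<longlonglongrightarrow> 1 / (real D * (real K * Dst + 1))"
  proof (intro tendsto_intros Dst d1)
    have "Dst \<ge> 1" using Dp_ge1 Dst by (intro LIMSEQ_le_const) auto
    then have "0 \<le> real K * Dst" by simp
    then have "real K * Dst + 1 > 0" by linarith
    then show "real D * (real K * Dst + 1) \<noteq> 0" using DK by simp
  qed
  then have "(\<lambda>n. E n / E (Suc n)) \<longlonglongrightarrow> 1 / (real D * (real K * Dst + 1))"
  proof (rule Lim_transform_eventually)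
    show "\<forall>\<^sub>F n in sequentially. 1 / (real D * (real K * Dp n + real (d n))) = E n / E (Suc n)"
      using eventually_ge_at_top[of 1] by eventually_elim (simp add: tau_eq)
  qed
  then show ?thesis by (auto simp: convergent_def)
next
  case False
  have lim: "filterlim Dp at_top sequentially"
  proof (subst filterlim_at_top, intro allI)
    fix Z
    obtain n0 where "Dp n0 > Z" using False by (meson not_le)
    then have "\<forall>n\<ge>n0. Z \<le> Dp n" using Dp_inc unfolding incseq_def by (meson less_le_trans less_imp_le)
    then show "\<forall>\<^sub>F n in sequentially. Z \<le> Dp n" unfolding eventually_sequentially by blast
  qed
  have inv: "(\<lambda>n. inverse (Dp n)) \<longlonglongrightarrow> 0" by (rule tendsto_inverse_0_at_top[OF lim])
  have "(\<lambda>n. E n / E (Suc n)) \<longlonglongrightarrow> 0"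
  proof (rule tendsto_sandwich[OF _ _ tendsto_const inv])
    show "\<forall>\<^sub>F n in sequentially. 0 \<le> E n / E (Suc n)"
      by (intro always_eventually allI) (metis E_pos divide_nonneg_nonneg order_trans zero_le_one)
    show "\<forall>\<^sub>F n in sequentially. E n / E (Suc n) \<le> inverse (Dp n)"
      using eventually_ge_at_top[of 1]
    proof eventually_elim
      case (elim n)
      have "Dp n \<le> real D * (real K * Dp n + real (d n))"
      proof -
        have "Dp n \<le> real K * Dp n" using DK Dp_ge1[of n] by (simp add: mult_le_cancel_right1)
        also have "\<dots> \<le> real K * Dp n + real (d n)" by simp
        also have "\<dots> \<le> real D * (real K * Dp n + real (d n))"
        proof -
          have "0 \<le> real K * Dp n + real (d n)" using Dp_ge1[of n] by simp
          then show ?thesis using DK mult_right_mono[of 1 "real D" "real K * Dp n + real (d n)"] by simp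
        qed
        finally show ?thesis .
      qed
      then have "1 / (real D * (real K * Dp n + real (d n))) \<le> 1 / Dp n"
        using Dp_ge1[of n] by (intro divide_left_mono) auto
      then show ?case unfolding tau_eq[OF elim] by (simp add: inverse_eq_divide)
    qed
  qed
  then show ?thesis by (auto simp: convergent_def)
qed

end

lemma lim_ge_freq: fixes X :: "nat \<Rightarrow> real"
  assumes "X \<longlonglongrightarrow> l" "\<exists>\<^sub>F n in sequentially. X n > t" shows "l \<ge> t"
proof (rule ccontr)
  assume "\<not> l \<ge> t"
  then have "\<forall>\<^sub>F n in sequentially. X n < t" using assms(1) by (intro order_tendstoD(2)) auto
  then have "\<forall>\<^sub>F n in sequentially. \<not> X n > t" by (rule eventually_mono) auto
  then show False using assms(2) unfolding frequently_def by simp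
qed

lemma lim_le_freq: fixes X :: "nat \<Rightarrow> real"
  assumes "X \<longlonglongrightarrow> l" "\<exists>\<^sub>F n in sequentially. X n < t" shows "l \<le> t"
proof (rule ccontr)
  assume "\<not> l \<le> t"
  then have "\<forall>\<^sub>F n in sequentially. X n > t" using assms(1) by (intro order_tendstoD(1)) auto
  then have "\<forall>\<^sub>F n in sequentially. \<not> X n < t" by (rule eventually_mono) auto
  then show False using assms(2) unfolding frequently_def by simp
qed


context L32H begin

definition "J N = (SOME j. Step N j)"
definition "w = rec_nat N1 (\<lambda>_ n. n + J n)"
definition "\<kappa> = 1 / (1 - q)"
definition "\<Phi> N = s N + \<kappa> * e N"

lemma w_0: "w 0 = N1" unfolding w_def by simp
lemma w_Suc: "w (Suc i) = w i + J (w i)" unfolding w_def by simp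

lemma J_step: "N \<ge> N1 \<Longrightarrow> Step N (J N)"
  unfolding J_def using step_exists by (rule someI_ex) (use step_exists in blast)

lemma w_ge: "w i \<ge> N1"
  by (induction i) (auto simp: w_0 w_Suc)

lemma J_ge1: "N \<ge> N1 \<Longrightarrow> J N \<ge> 1" using J_step unfolding Step_def by blast

lemma w_strict: "w i < w (Suc i)" using J_ge1[OF w_ge[of i]] by (simp add: w_Suc)

lemma w_mono: "i \<le> k \<Longrightarrow> w i \<le> w k"
proof (induction k rule: dec_induct)
  case base then show ?case by simp
next
  case (step k) then show ?case using w_strict[of k] by simp
qed

lemma w_ge_i: "w i \<ge> i"
proof (induction i)
  case 0 then show ?case by simp
next
  case (Suc i) then show ?case using w_strict[of i] by simp
qed

lemma cover: "m \<ge> N1 \<Longrightarrow> \<exists>k. w k \<le> m \<and> m < w (Suc k)"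
proof (induction m rule: dec_induct)
  case base then show ?case using w_strict[of 0] by (intro exI[of _ 0]) (simp add: w_0)
next
  case (step m)
  then obtain k where k: "w k \<le> m" "m < w (Suc k)" by blast
  show ?case
  proof (cases "Suc m < w (Suc k)")
    case True then show ?thesis using k by (intro exI[of _ k]) simp
  next
    case False
    then have "Suc m = w (Suc k)" using k by simp
    then show ?thesis using w_strict[of "Suc k"] by (intro exI[of _ "Suc k"]) simp
  qed
qed

lemma kappa: "\<kappa> \<ge> 1" "\<kappa> * (1 - q) = 1"
  unfolding \<kappa>_def using q_pos q_lt1 by (auto simp: field_simps)

lemma Phi_nonneg: "\<Phi> N \<ge> 0" unfolding \<Phi>_def using s_nonneg e_nonneg kappa by simp

lemma e_mono: "N \<le> M \<Longrightarrow> e M \<le> e N"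
  unfolding e_def using q_pos q_lt1 Ce_ge C5_nonneg
  by (intro mult_left_mono power_decreasing) auto

lemma Phi_step: assumes "Step N j" shows "\<Phi> (N + j) \<le> \<Phi> N"
proof -
  have st: "j \<ge> 1" "s (N + j) \<le> s N + e N" using assms unfolding Step_def by auto
  have "e (N + j) \<le> e (Suc N)" using st by (intro e_mono) simp
  also have "\<dots> = q * e N" by (rule e_Suc)
  finally have "\<kappa> * e (N + j) \<le> \<kappa> * (q * e N)" using kappa by (intro mult_left_mono) auto
  moreover have "e N + \<kappa> * (q * e N) = \<kappa> * e N"
  proof -
    have "e N + \<kappa> * (q * e N) = e N * (1 + \<kappa> * q)" by (simp add: algebra_simps)
    also have "1 + \<kappa> * q = \<kappa>" using kappa(2) by (simp add: algebra_simps)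
    finally show ?thesis by simp
  qed
  ultimately show ?thesis unfolding \<Phi>_def using st by linarith
qed

lemma Phi_bad: assumes "Step N j" "j \<noteq> 1" shows "\<Phi> (N + j) \<le> \<Phi> N / 4 + \<kappa> * e N"
proof -
  have st: "j \<ge> 1" "s (N + j) \<le> (s N + e N) / 4" using assms unfolding Step_def by auto
  have "\<kappa> * e (N + j) \<le> \<kappa> * e N" using kappa by (intro mult_left_mono e_mono) auto
  moreover have "e N \<le> \<kappa> * e N" using kappa e_nonneg[of N] by (simp add: mult_le_cancel_right1)
  moreover have "(s N + e N) / 4 \<le> (s N + \<kappa> * e N) / 4" using calculation(2) by simp
  ultimately show ?thesis unfolding \<Phi>_def using st by linarith
qed

lemma s_inside: assumes "Step N j" "r < j" shows "s (N + r) \<le> R * \<Phi> N"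
proof (cases "r = 0")
  case True
  have "s N \<le> \<Phi> N" unfolding \<Phi>_def using e_nonneg[of N] kappa by simp
  also have "\<dots> \<le> R * \<Phi> N" using R_ge1 Phi_nonneg[of N] by (simp add: mult_le_cancel_right1)
  finally show ?thesis using True by simp
next
  case False
  then have "s (N + r) \<le> R * (s N + e N)" using assms unfolding Step_def by auto
  also have "\<dots> \<le> R * \<Phi> N" unfolding \<Phi>_def using R_ge1 e_nonneg[of N] kappa
    by (intro mult_left_mono) (auto simp: mult_le_cancel_right1)
  finally show ?thesis .
qed

lemma s_cover: "w k \<le> m \<Longrightarrow> m < w (Suc k) \<Longrightarrow> s m \<le> R * \<Phi> (w k)"
proof -
  assume m: "w k \<le> m" "m < w (Suc k)"
  have st: "Step (w k) (J (w k))" by (rule J_step[OF w_ge])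
  have "m - w k < J (w k)" using m by (simp add: w_Suc)
  then have "s (w k + (m - w k)) \<le> R * \<Phi> (w k)" by (rule s_inside[OF st])
  then show ?thesis using m by simp
qed

lemma PhiW_dec: "decseq (\<lambda>i. \<Phi> (w i))"
  by (rule decseq_SucI) (simp add: w_Suc Phi_step J_step w_ge)

lemma e_lim: "e \<longlonglongrightarrow> 0"
  unfolding e_def using q_pos q_lt1 by (intro tendsto_mult_right_zero LIMSEQ_power_zero) simp

definition "t1 = A1 + (A2 - A1) / 3"
definition "t2 = A2 - (A2 - A1) / 3"

lemma t12: "A1 < t1" "0 < t2" "t2 < A2" "log 2 t1 < log 2 t2" "0 < log 2 t2"
proof -
  show a1: "A1 < t1" unfolding t1_def using ord pos by (simp add: field_simps)
  show a2: "0 < t2" unfolding t2_def using ord pos by (simp add: field_simps)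
  show a3: "t2 < A2" unfolding t2_def using ord pos by (simp add: field_simps)
  have "t1 < t2" "0 < t1" "1 < t2" unfolding t1_def t2_def using ord pos by (simp_all add: field_simps)
  then show "log 2 t1 < log 2 t2" "0 < log 2 t2" by auto
qed

lemma caseB_false: assumes B: "\<forall>i0. \<exists>i\<ge>i0. J (w i) \<noteq> 1" shows False
proof -
  have nn: "\<forall>i. 0 \<le> \<Phi> (w i)" using Phi_nonneg by blast
  obtain \<mu> where mu: "(\<lambda>i. \<Phi> (w i)) \<longlonglongrightarrow> \<mu>" "\<forall>i. \<mu> \<le> \<Phi> (w i)"
    by (rule decseq_convergent[OF PhiW_dec nn])
  have mu0: "\<mu> \<le> 0"
  proof (rule ccontr)
    assume "\<not> \<mu> \<le> 0"
    then have mp: "\<mu> > 0" by simp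
    have ev1: "\<forall>\<^sub>F i in sequentially. \<Phi> (w i) < 3/2 * \<mu>"
      using mu(1) mp by (intro order_tendstoD(2)) auto
    have "(\<lambda>i. \<kappa> * e i) \<longlonglongrightarrow> 0" using e_lim by (intro tendsto_mult_right_zero)
    then have ev2: "\<forall>\<^sub>F i in sequentially. \<kappa> * e i < \<mu> / 8"
      using mp by (intro order_tendstoD(2)) auto
    obtain i0 where i0: "\<And>i. i \<ge> i0 \<Longrightarrow> \<Phi> (w i) < 3/2 * \<mu> \<and> \<kappa> * e i < \<mu> / 8"
      using eventually_conj[OF ev1 ev2] unfolding eventually_at_top_linorder by blast
    obtain i where i: "i \<ge> i0" "J (w i) \<noteq> 1" using B by blast
    have "\<Phi> (w (Suc i)) \<le> \<Phi> (w i) / 4 + \<kappa> * e (w i)"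
      unfolding w_Suc by (intro Phi_bad J_step w_ge i(2))
    also have "\<kappa> * e (w i) \<le> \<kappa> * e i" using kappa w_ge_i[of i] by (intro mult_left_mono e_mono) auto
    finally have "\<Phi> (w (Suc i)) \<le> \<Phi> (w i) / 4 + \<kappa> * e i" by simp
    moreover have "\<Phi> (w i) < 3/2 * \<mu>" using i0[OF i(1)] by simp
    moreover have "\<kappa> * e i < \<mu> / 8" using i0[OF i(1)] by simp
    ultimately have "\<Phi> (w (Suc i)) < \<mu>" using mp by linarith
    then show False using mu(2)[rule_format, of "Suc i"] by simp
  qed
  have "0 \<le> \<mu>" by (rule LIMSEQ_le_const[OF mu(1)]) (use Phi_nonneg in auto)
  then have mu_eq: "\<mu> = 0" using mu0 by simp
  have "\<forall>\<^sub>F i in sequentially. \<Phi> (w i) < log 2 t2 / R"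
    using mu(1) t12 R_ge1 unfolding mu_eq by (intro order_tendstoD(2)) auto
  then obtain i0 where i0: "\<Phi> (w i0) < log 2 t2 / R" unfolding eventually_at_top_linorder by blast
  have "\<forall>\<^sub>F m in sequentially. L m < log 2 t2"
    using eventually_ge_at_top[of "w i0"]
  proof eventually_elim
    case (elim m)
    have m1: "m \<ge> N1" using w_ge[of i0] elim by simp
    then obtain k where k: "w k \<le> m" "m < w (Suc k)" using cover by blast
    have "k \<ge> i0"
    proof (rule ccontr)
      assume "\<not> k \<ge> i0"
      then have "w (Suc k) \<le> w i0" by (intro w_mono) simp
      then show False using k elim by simp
    qed
    have "L m \<le> s m" using m1 unfolding N1_def by (intro L_le_s) simp
    also have "\<dots> \<le> R * \<Phi> (w k)" by (rule s_cover[OF k])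
    also have "\<dots> \<le> R * \<Phi> (w i0)" using PhiW_dec \<open>k \<ge> i0\<close> R_ge1
      by (intro mult_left_mono) (auto simp: decseq_def)
    also have "\<dots> < R * (log 2 t2 / R)" using i0 R_ge1 by (intro mult_strict_left_mono) auto
    also have "\<dots> = log 2 t2" using R_ge1 by simp
    finally show ?case .
  qed
  then have "\<forall>\<^sub>F m in sequentially. \<not> L m > log 2 t2" by (rule eventually_mono) auto
  moreover have "\<exists>\<^sub>F m in sequentially. L m > log 2 t2" using freq_hi t12 by simp
  ultimately show False unfolding frequently_def by simp
qed

end

context L32H begin

lemma caseA_false: assumes A: "\<exists>i0. \<forall>i\<ge>i0. J (w i) = 1" shows False
proof -
  obtain i0 where i0: "\<And>i. i \<ge> i0 \<Longrightarrow> J (w i) = 1" using A by blast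
  define m0 where "m0 = w i0"
  have wk: "w (i0 + k) = m0 + k" for k
  proof (induction k)
    case 0 then show ?case unfolding m0_def by simp
  next
    case (Suc k)
    have "w (i0 + Suc k) = w (i0 + k) + J (w (i0 + k))" by (simp add: w_Suc)
    also have "J (w (i0 + k)) = 1" by (rule i0) simp
    finally show ?case using Suc by simp
  qed
  have st1: "Step m 1" if "m \<ge> m0" for m
  proof -
    have "w (i0 + (m - m0)) = m" using wk[of "m - m0"] that by simp
    moreover have "Step (w (i0 + (m - m0))) (J (w (i0 + (m - m0))))" by (rule J_step[OF w_ge])
    moreover have "J (w (i0 + (m - m0))) = 1" by (rule i0) simp
    ultimately show ?thesis by simp
  qed
  have dec: "decseq (\<lambda>k. \<Phi> (k + m0))"
  proof (rule decseq_SucI)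
    fix k
    have "\<Phi> ((k + m0) + 1) \<le> \<Phi> (k + m0)" by (rule Phi_step[OF st1]) simp
    then show "\<Phi> (Suc k + m0) \<le> \<Phi> (k + m0)" by simp
  qed
  have nn: "\<forall>k. 0 \<le> \<Phi> (k + m0)" using Phi_nonneg by blast
  obtain lL where ell: "(\<lambda>k. \<Phi> (k + m0)) \<longlonglongrightarrow> lL" "\<forall>k. lL \<le> \<Phi> (k + m0)"
    by (rule decseq_convergent[OF dec nn])
  have "\<Phi> \<longlonglongrightarrow> lL" using ell(1) by (rule LIMSEQ_offset)
  moreover have "(\<lambda>n. \<kappa> * e n) \<longlonglongrightarrow> \<kappa> * 0" by (intro tendsto_mult tendsto_const e_lim)
  ultimately have "(\<lambda>n. \<Phi> n - \<kappa> * e n) \<longlonglongrightarrow> lL - \<kappa> * 0" by (intro tendsto_diff)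
  then have slim: "s \<longlonglongrightarrow> lL" unfolding \<Phi>_def by simp
  obtain \<tau> where tau: "(\<lambda>n. E n / E (Suc n)) \<longlonglongrightarrow> \<tau>" using tau_conv unfolding convergent_def by blast
  have "(\<lambda>n. s (Suc n) - E n / E (Suc n) * s n) \<longlonglongrightarrow> lL - \<tau> * lL"
    by (intro tendsto_diff tendsto_mult LIMSEQ_Suc slim tau)
  moreover have "(\<lambda>n. s (Suc n) - E n / E (Suc n) * s n) = (\<lambda>n. L (Suc n))"
    by (rule ext) (simp add: s_Suc)
  ultimately have "(\<lambda>n. L (Suc n)) \<longlonglongrightarrow> lL - \<tau> * lL" by simp
  then have Llim: "L \<longlonglongrightarrow> lL - \<tau> * lL" by (rule LIMSEQ_imp_Suc)
  have "lL - \<tau> * lL \<ge> log 2 t2" using Llim freq_hi[OF t12(2,3)] by (rule lim_ge_freq)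
  moreover have "lL - \<tau> * lL \<le> log 2 t1" using Llim freq_lo[OF t12(1)] by (rule lim_le_freq)
  ultimately show False using t12(4) by simp
qed

lemma contradiction: False
proof (cases "\<exists>i0. \<forall>i\<ge>i0. J (w i) = 1")
  case True then show ?thesis by (rule caseA_false)
next
  case False
  then have "\<forall>i0. \<exists>i\<ge>i0. J (w i) \<noteq> 1" by blast
  then show ?thesis by (rule caseB_false)
qed

end

theorem lemma3p2:
  fixes D K :: nat and A1 A2 a \<epsilon> c :: real
    and d :: "nat \<Rightarrow> nat"
    and \<alpha> b :: "nat \<Rightarrow> nat \<Rightarrow> complex"
    and \<beta> :: "nat \<Rightarrow> int"
  assumes DK: "D \<ge> 1" "K \<ge> 1"
    and pos: "a > 0" "\<epsilon> > 0" "A1 > 0" "A2 > 0"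
    and ord: "a < 1" "1 \<le> A1" "A1 < A2"
    and d_nat: "\<forall>n\<ge>1. d n \<ge> 1"
    and h1: "\<forall>n\<ge>1. norm (\<alpha> 1 n) < norm (\<alpha> 1 (n + 1))"
    and h2: "\<forall>n\<ge>1. norm (\<alpha> 1 n) \<ge> real n powr (1 + \<epsilon>)"
    and h3: "liminf (\<lambda>n. ereal (norm (\<alpha> 1 n) powr (1 / (real D ^ n * real (Pprod K d n))))) = ereal A1"
    and h4: "limsup (\<lambda>n. ereal (norm (\<alpha> 1 n) powr (1 / (real D ^ n * real (Pprod K d n))))) = ereal A2"
    and h5: "\<forall>n\<ge>1. \<forall>i. 1 < i \<and> i \<le> K \<longrightarrow>
               2 powr (- ((log 2 (norm (\<alpha> 1 n))) powr a)) < norm (\<alpha> 1 n) / norm (\<alpha> i n) \<and>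
               norm (\<alpha> 1 n) / norm (\<alpha> i n) < 2 powr ((log 2 (norm (\<alpha> 1 n))) powr a)"
    and h6: "\<forall>n\<ge>1. \<forall>i. 1 \<le> i \<and> i \<le> K \<longrightarrow>
               norm (b i n) \<le> 2 powr ((log 2 (norm (\<alpha> 1 n))) powr a)"
    and hbeta: "\<exists>j\<in>{1..K}. \<beta> j \<noteq> 0"
    and hc: "a < c" "c < 1"
  shows "liminf (\<lambda>N. ereal (norm (gamma K \<beta> b \<alpha> N) *
            (2 powr (real D powr (c * real N) * (\<Prod>i=1..N-1. real (K * Dprod d i + d i) powr c))
             * (\<Prod>n=1..N. norm (\<alpha> 1 n) ^ K)) ^ (D * Dprod d N))) = 0"
proof -
  have loc: "L32 D K A1 A2 a \<epsilon> c d \<alpha> b \<beta>"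
    unfolding L32_def using DK pos ord d_nat h1 h2 h3 h4 h5 h6 hbeta hc by blast
  define f where "f N = norm (gamma K \<beta> b \<alpha> N) *
            (2 powr (real D powr (c * real N) * (\<Prod>i=1..N-1. real (K * Dprod d i + d i) powr c))
             * (\<Prod>n=1..N. norm (\<alpha> 1 n) ^ K)) ^ (D * Dprod d N)" for N
  have f_nonneg: "f N \<ge> 0" for N unfolding f_def by (intro mult_nonneg_nonneg zero_le_power prod_nonneg) auto
  interpret L32 D K A1 A2 a \<epsilon> c d \<alpha> b \<beta> by (rule loc)
  have f_termf: "f N = termf N" for N
    unfolding f_def termf_def ..
  have ge: "0 \<le> liminf (\<lambda>N. ereal (f N))"
    by (rule Liminf_bounded) (use f_nonneg in auto)
  have le: "liminf (\<lambda>N. ereal (f N)) \<le> 0"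
  proof (rule ccontr)
    assume "\<not> liminf (\<lambda>N. ereal (f N)) \<le> 0"
    then have lp: "liminf (\<lambda>N. ereal (f N)) > 0" by simp
    obtain \<eta> where eta: "\<eta> > 0" "ereal \<eta> < liminf (\<lambda>N. ereal (f N))"
    proof (cases "liminf (\<lambda>N. ereal (f N))")
      case (real r)
      then show ?thesis using lp that[of "r / 2"] by simp
    next
      case PInf
      then show ?thesis using that[of 1] by simp
    next
      case MInf
      then show ?thesis using lp by simp
    qed
    have "\<forall>\<^sub>F N in sequentially. ereal \<eta> < ereal (f N)" using eta(2) by (rule less_LiminfD)
    then obtain N0 where N0: "\<And>N. N \<ge> N0 \<Longrightarrow> \<eta> < f N"
      unfolding eventually_at_top_linorder by auto
    have "L32H D K A1 A2 a \<epsilon> c d \<alpha> b \<beta> \<eta> N0"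
      unfolding L32H_def L32H_axioms_def using loc eta(1) N0 f_termf by (auto intro: less_imp_le)
    then show False by (rule L32H.contradiction)
  qed
  show ?thesis using ge le unfolding f_def by simp
qed

end
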